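(* There is $\delta_0>0$ such that the following holds for every fixed $\delta\in(0,\delta_0)$ and every fixed $\varepsilon\in(0,\delta^2/9)$. Let $N\to\infty$, put $k=(1+\delta)\log_2 N$, $n=(1/2+\delta)N$ (rounded to integers), and let $m=m(N)$ be an integer with $m=(1+o(1))\,\varepsilon(1+2\delta)^k N$. Let $f=\bigwedge_{i=1}^m C_i$ where $C_1,\dots,C_m$ are independent uniformly random $k$-clauses on $n$ variables. Then $$\Pr\big(\mu(f)>\exp[-n^{\delta}]\big)=o(2^{-N}).$$
   Context: $\mu$ is the uniform probability measure on $\{0,1\}^n$ and $\mu(f)=\mu(\{x:f(x)=1\})$. A uniformly random $k$-clause on $x_1,\dots,x_n$ is obtained by choosing a $k$-subset $K\subseteq[n]$ uniformly at random and a vector $g\in\{0,1\}^K$ uniformly at random; the clause is the Boolean function $C(x)=1$ iff $x_j=g_j$ for some $j\in K$. *)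

theory Defs
  imports "HOL-Probability.Probability" "HOL-Library.Landau_Symbols"
begin

text \<open>Assignments x in {0,1}^n: functions on the variable indices {..<n}
  (True = 1), extensional outside.\<close>
definition assignments :: "nat \<Rightarrow> (nat \<Rightarrow> bool) set" where
  "assignments n = {..<n} \<rightarrow>\<^sub>E (UNIV :: bool set)"

text \<open>A k-clause: a set K of k variables and a vector g in {0,1}^K.\<close>
type_synonym clause = "nat set \<times> (nat \<Rightarrow> bool)"

definition clause_val :: "clause \<Rightarrow> (nat \<Rightarrow> bool) \<Rightarrow> bool" where
  "clause_val C x = (\<exists>j\<in>fst C. x j = snd C j)"

definition random_clause :: "nat \<Rightarrow> nat \<Rightarrow> clause pmf" where
  "random_clause n k =
     pmf_of_set {K. K \<subseteq> {..<n} \<and> card K = k} \<bind>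
       (\<lambda>K. map_pmf (\<lambda>g. (K, g)) (pmf_of_set (K \<rightarrow>\<^sub>E (UNIV :: bool set))))"

definition random_formula :: "nat \<Rightarrow> nat \<Rightarrow> nat \<Rightarrow> (nat \<Rightarrow> clause) pmf" where
  "random_formula n k m = Pi_pmf {..<m} undefined (\<lambda>_. random_clause n k)"

definition mu_formula :: "nat \<Rightarrow> nat \<Rightarrow> (nat \<Rightarrow> clause) \<Rightarrow> real" where
  "mu_formula n m Cs =
     real (card {x \<in> assignments n. \<forall>i<m. clause_val (Cs i) x}) / 2 ^ n"

end

theory Submission
  imports Defs "HOL-Real_Asymp.Real_Asymp"
begin


definition Ks :: "nat \<Rightarrow> nat \<Rightarrow> nat set set" where
  "Ks n k = {K. K \<subseteq> {..<n} \<and> card K = k}"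
definition CS :: "nat \<Rightarrow> nat \<Rightarrow> clause set" where
  "CS n k = (SIGMA K:Ks n k. K \<rightarrow>\<^sub>E (UNIV::bool set))"

lemma finite_Ks: "finite (Ks n k)"
  unfolding Ks_def by (rule finite_subset[of _ "Pow {..<n}"]) auto

lemma Ks_ne: "k \<le> n \<Longrightarrow> Ks n k \<noteq> {}"
proof -
  assume "k \<le> n"
  hence "{..<k} \<in> Ks n k" unfolding Ks_def by auto
  thus ?thesis by blast
qed

lemma card_Ks: "card (Ks n k) = n choose k"
  unfolding Ks_def using n_subsets[of "{..<n}" k] by simp

lemma finite_Ks_elem: "K \<in> Ks n k \<Longrightarrow> finite K"
  unfolding Ks_def using finite_subset by auto

lemma card_G: "finite K \<Longrightarrow> card (K \<rightarrow>\<^sub>E (UNIV::bool set)) = 2 ^ card K"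
  by (simp add: card_PiE)

lemma finite_G: "finite K \<Longrightarrow> finite (K \<rightarrow>\<^sub>E (UNIV::bool set))"
  by (rule finite_PiE) auto

lemma finite_CS: "finite (CS n k)"
  unfolding CS_def using finite_Ks
  by (rule finite_SigmaI) (rule finite_G[OF finite_Ks_elem])

lemma fin_G_Ks: "\<forall>K\<in>Ks n k. finite (K \<rightarrow>\<^sub>E (UNIV::bool set))"
proof
  fix K assume "K \<in> Ks n k"
  thus "finite (K \<rightarrow>\<^sub>E (UNIV::bool set))" by (rule finite_G[OF finite_Ks_elem])
qed

lemma card_CS: "card (CS n k) = (n choose k) * 2 ^ k"
proof -
  have "card (CS n k) = (\<Sum>K\<in>Ks n k. card (K \<rightarrow>\<^sub>E (UNIV::bool set)))"
    unfolding CS_def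
    by (rule card_SigmaI[OF finite_Ks fin_G_Ks])
  also have "\<dots> = (\<Sum>K\<in>Ks n k. 2 ^ k)"
  proof (rule sum.cong[OF refl])
    fix K assume K: "K \<in> Ks n k"
    have "card K = k" using K by (simp add: Ks_def)
    thus "card (K \<rightarrow>\<^sub>E (UNIV::bool set)) = 2 ^ k" using card_G[OF finite_Ks_elem[OF K]] by simp
  qed
  finally show ?thesis by (simp add: card_Ks)
qed

lemma rc_eq:
  assumes "k \<le> n"
  shows "random_clause n k = pmf_of_set (CS n k)"
proof -
  define f where "f K = (\<lambda>g. (K, g)) ` (K \<rightarrow>\<^sub>E (UNIV::bool set))" for K :: "nat set"
  have "random_clause n k = pmf_of_set (Ks n k) \<bind> (\<lambda>K. pmf_of_set (f K))"
    unfolding random_clause_def Ks_def[symmetric]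
  proof (intro bind_pmf_cong refl)
    fix K assume "K \<in> set_pmf (pmf_of_set (Ks n k))"
    hence K: "K \<in> Ks n k" using finite_Ks Ks_ne[OF assms] by simp
    show "map_pmf (\<lambda>g. (K, g)) (pmf_of_set (K \<rightarrow>\<^sub>E UNIV)) = pmf_of_set (f K)"
      unfolding f_def
    proof (rule map_pmf_of_set_inj)
      show "inj_on (Pair K) (K \<rightarrow>\<^sub>E UNIV)" by (simp add: inj_on_def)
      show "K \<rightarrow>\<^sub>E (UNIV::bool set) \<noteq> {}" by (simp add: PiE_eq_empty_iff)
      show "finite (K \<rightarrow>\<^sub>E (UNIV::bool set))" using finite_Ks_elem[OF K] by (rule finite_G)
    qed
  qed
  also have "\<dots> = pmf_of_set (\<Union>(f ` Ks n k))"
  proof (rule pmf_of_set_UN[symmetric, where n = "2^k"])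
    have "\<Union>(f ` Ks n k) = CS n k" unfolding f_def[abs_def] CS_def by blast
    thus "finite (\<Union>(f ` Ks n k))" using finite_CS by simp
    show "Ks n k \<noteq> {}" using Ks_ne[OF assms] .
    show "f K \<noteq> {}" if "K \<in> Ks n k" for K unfolding f_def by (simp add: PiE_eq_empty_iff)
    show "card (f K) = 2 ^ k" if "K \<in> Ks n k" for K
    proof -
      have "card (f K) = card (K \<rightarrow>\<^sub>E (UNIV::bool set))"
        unfolding f_def by (rule card_image) (simp add: inj_on_def)
      also have "\<dots> = 2 ^ card K" using finite_Ks_elem[OF that] by (rule card_G)
      also have "card K = k" using that by (simp add: Ks_def)
      finally show ?thesis .
    qed
    show "disjoint_family_on f (Ks n k)" unfolding f_def[abs_def] disjoint_family_on_def by blast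
  qed
  also have "\<Union>(f ` Ks n k) = CS n k" unfolding f_def[abs_def] CS_def by blast
  finally show ?thesis .
qed



definition fc :: "(nat \<Rightarrow> bool) set \<Rightarrow> clause \<Rightarrow> nat" where
  "fc T C = card {x\<in>T. \<not> clause_val C x}"

definition negr :: "(nat \<Rightarrow> bool) \<Rightarrow> nat set \<Rightarrow> clause" where
  "negr x K = (K, restrict (\<lambda>j. \<not> x j) K)"

lemma falsified_CS:
  "{C\<in>CS n k. \<not> clause_val C x \<and> \<not> clause_val C y} = negr x ` {K\<in>Ks n k. \<forall>j\<in>K. x j = y j}"
proof (intro equalityI subsetI)
  fix C assume "C \<in> {C\<in>CS n k. \<not> clause_val C x \<and> \<not> clause_val C y}"
  then obtain K g where C: "C = (K,g)" "K \<in> Ks n k" "g \<in> K \<rightarrow>\<^sub>E UNIV"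
    "\<forall>j\<in>K. x j \<noteq> g j" "\<forall>j\<in>K. y j \<noteq> g j"
    unfolding CS_def clause_val_def by auto
  have "g = restrict (\<lambda>j. \<not> x j) K"
    using C(3,4) by (auto simp: fun_eq_iff PiE_def extensional_def)
  moreover have "\<forall>j\<in>K. x j = y j" using C(4,5) by auto
  ultimately show "C \<in> negr x ` {K\<in>Ks n k. \<forall>j\<in>K. x j = y j}"
    using C unfolding negr_def by auto
next
  fix C assume "C \<in> negr x ` {K\<in>Ks n k. \<forall>j\<in>K. x j = y j}"
  then show "C \<in> {C\<in>CS n k. \<not> clause_val C x \<and> \<not> clause_val C y}"
    unfolding negr_def CS_def clause_val_def by auto
qed

lemma inj_negr: "inj_on (negr x) A"
  unfolding negr_def inj_on_def by auto

lemma card_falsified2: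
  "card {C\<in>CS n k. \<not> clause_val C x \<and> \<not> clause_val C y} = card {K\<in>Ks n k. \<forall>j\<in>K. x j = y j}"
  by (simp add: falsified_CS card_image inj_negr)

lemma card_falsified1:
  "card {C\<in>CS n k. \<not> clause_val C x} = n choose k"
  using card_falsified2[of n k x x] by (simp add: card_Ks)

lemma sum_fc:
  assumes "finite T"
  shows "(\<Sum>C\<in>CS n k. real (fc T C)) = real (card T) * (n choose k)"
proof -
  have "(\<Sum>C\<in>CS n k. real (fc T C)) = (\<Sum>C\<in>CS n k. \<Sum>x\<in>T. if \<not> clause_val C x then 1 else 0)"
    unfolding fc_def using assms by (intro sum.cong refl) (simp add: sum.If_cases Int_def)
  also have "\<dots> = (\<Sum>x\<in>T. \<Sum>C\<in>CS n k. if \<not> clause_val C x then 1 else 0)"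
    by (rule sum.swap)
  also have "\<dots> = (\<Sum>x\<in>T. real (n choose k))"
    using finite_CS by (intro sum.cong refl) (simp add: sum.If_cases card_falsified1 Int_def)
  finally show ?thesis by simp
qed

lemma sum_fc2:
  assumes "finite T"
  shows "(\<Sum>C\<in>CS n k. real (fc T C) ^ 2) =
     (\<Sum>x\<in>T. \<Sum>y\<in>T. real (card {K\<in>Ks n k. \<forall>j\<in>K. x j = y j}))"
proof -
  have "(\<Sum>C\<in>CS n k. real (fc T C) ^ 2) = (\<Sum>C\<in>CS n k. \<Sum>x\<in>T. \<Sum>y\<in>T.
      (if \<not> clause_val C x then 1 else 0) * (if \<not> clause_val C y then 1 else (0::real)))"
  proof (intro sum.cong refl)
    fix C
    have "real (fc T C) = (\<Sum>x\<in>T. if \<not> clause_val C x then 1 else 0)"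
      unfolding fc_def using assms by (simp add: sum.If_cases Int_def)
    thus "real (fc T C) ^ 2 = (\<Sum>x\<in>T. \<Sum>y\<in>T.
      (if \<not> clause_val C x then 1 else 0) * (if \<not> clause_val C y then 1 else (0::real)))"
      by (simp add: power2_eq_square sum_product)
  qed
  also have "\<dots> = (\<Sum>x\<in>T. \<Sum>C\<in>CS n k. \<Sum>y\<in>T.
      (if \<not> clause_val C x then 1 else 0) * (if \<not> clause_val C y then 1 else (0::real)))"
    by (rule sum.swap)
  also have "\<dots> = (\<Sum>x\<in>T. \<Sum>y\<in>T. \<Sum>C\<in>CS n k.
      (if \<not> clause_val C x then 1 else 0) * (if \<not> clause_val C y then 1 else (0::real)))"
    by (intro sum.cong refl sum.swap)
  also have "\<dots> = (\<Sum>x\<in>T. \<Sum>y\<in>T. real (card {K\<in>Ks n k. \<forall>j\<in>K. x j = y j}))"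
  proof (intro sum.cong refl)
    fix x y
    have "(\<Sum>C\<in>CS n k. (if \<not> clause_val C x then 1 else 0) * (if \<not> clause_val C y then 1 else (0::real)))
        = (\<Sum>C\<in>CS n k. if \<not> clause_val C x \<and> \<not> clause_val C y then 1 else 0)"
      by (intro sum.cong refl) auto
    also have "\<dots> = real (card {C\<in>CS n k. \<not> clause_val C x \<and> \<not> clause_val C y})"
      using finite_CS by (simp add: sum.If_cases Int_def)
    finally show "(\<Sum>C\<in>CS n k. (if \<not> clause_val C x then 1 else 0) * (if \<not> clause_val C y then 1 else (0::real)))
       = real (card {K\<in>Ks n k. \<forall>j\<in>K. x j = y j})" by (simp add: card_falsified2)
  qed
  finally show ?thesis .
qed

lemma cheb_count:
  assumes T: "finite T" "card T > 0" and kn: "k \<le> n" and eta: "\<eta> \<ge> 0"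
    and S2: "(\<Sum>x\<in>T. \<Sum>y\<in>T. real (card {K\<in>Ks n k. \<forall>j\<in>K. x j = y j}))
               \<le> (1 + \<eta>) * real (card T) ^ 2 * real (n choose k) / 2 ^ k"
  shows "real (card {C\<in>CS n k. real (fc T C) < real (card T) / 2 ^ k / 2}) \<le> 4 * \<eta> * real (card (CS n k))"
proof -
  define t where "t = real (card T)"
  define B where "B = real (n choose k)"
  define p :: real where "p = 1 / 2 ^ k"
  have t: "t > 0" using T unfolding t_def by simp
  have p: "p > 0" unfolding p_def by simp
  have B: "B > 0" unfolding B_def using kn by simp
  have cardCS: "real (card (CS n k)) = B * 2 ^ k" unfolding B_def by (simp add: card_CS)
  have s1: "(\<Sum>C\<in>CS n k. real (fc T C)) = t * B" unfolding t_def B_def using sum_fc[OF T(1)] by simp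
  have s2: "(\<Sum>C\<in>CS n k. real (fc T C) ^ 2) \<le> (1 + \<eta>) * t ^ 2 * B * p"
  proof -
    have "(1 + \<eta>) * real (card T) ^ 2 * real (n choose k) / 2 ^ k = (1 + \<eta>) * t ^ 2 * B * p"
      unfolding t_def B_def p_def by simp
    thus ?thesis using S2 sum_fc2[OF T(1), of n k] by linarith
  qed
  have "(\<Sum>C\<in>CS n k. (real (fc T C) - p * t) ^ 2)
      = (\<Sum>C\<in>CS n k. real (fc T C) ^ 2) - 2 * p * t * (\<Sum>C\<in>CS n k. real (fc T C))
        + real (card (CS n k)) * p^2 * t^2"
  proof -
    have "(\<Sum>C\<in>CS n k. (real (fc T C) - p * t) ^ 2) = (\<Sum>C\<in>CS n k. real (fc T C) ^ 2 - 2 * p * t * real (fc T C) + p^2 * t^2)"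
      by (intro sum.cong refl) (simp add: power2_diff power_mult_distrib)
    also have "\<dots> = (\<Sum>C\<in>CS n k. real (fc T C) ^ 2) - (\<Sum>C\<in>CS n k. 2 * p * t * real (fc T C)) + (\<Sum>C\<in>CS n k. p^2 * t^2)"
      by (simp only: sum.distrib sum_subtractf)
    also have "\<dots> = (\<Sum>C\<in>CS n k. real (fc T C) ^ 2) - 2 * p * t * (\<Sum>C\<in>CS n k. real (fc T C)) + real (card (CS n k)) * p^2 * t^2"
      by (simp only: sum_distrib_left[symmetric] sum_constant) (simp add: mult.assoc)
    finally show ?thesis .
  qed
  also have "\<dots> \<le> (1 + \<eta>) * t ^ 2 * B * p - 2 * p * t * (t * B) + B * 2 ^ k * p^2 * t^2"
    using s2 unfolding s1 cardCS by linarith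
  also have "\<dots> = \<eta> * t^2 * B * p"
  proof -
    have "(2::real) ^ k * p^2 = p" unfolding p_def by (simp add: power2_eq_square)
    have "B * 2 ^ k * p^2 * t^2 = B * t^2 * (2 ^ k * p^2)" by (simp only: mult_ac)
    also have "\<dots> = B * t^2 * p" using \<open>(2::real) ^ k * p^2 = p\<close> by simp
    finally have e: "B * 2 ^ k * p^2 * t^2 = B * t^2 * p" .
    show ?thesis unfolding e by (simp add: power2_eq_square algebra_simps)
  qed
  finally have var: "(\<Sum>C\<in>CS n k. (real (fc T C) - p * t) ^ 2) \<le> \<eta> * t^2 * B * p" .
  define Bad where "Bad = {C\<in>CS n k. real (fc T C) < t / 2 ^ k / 2}"
  have "real (card Bad) * (p * t / 2) ^ 2 = (\<Sum>C\<in>Bad. (p * t / 2) ^ 2)" by simp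
  also have "\<dots> \<le> (\<Sum>C\<in>Bad. (real (fc T C) - p * t) ^ 2)"
  proof (intro sum_mono)
    fix C assume "C \<in> Bad"
    hence "real (fc T C) < p * t / 2" unfolding Bad_def p_def by simp
    hence "p * t / 2 \<le> p * t - real (fc T C)" by linarith
    hence "(p * t / 2) ^ 2 \<le> (p * t - real (fc T C)) ^ 2"
      using p t by (intro power_mono) auto
    thus "(p * t / 2) ^ 2 \<le> (real (fc T C) - p * t) ^ 2" by (simp add: power2_commute)
  qed
  also have "\<dots> \<le> (\<Sum>C\<in>CS n k. (real (fc T C) - p * t) ^ 2)"
    by (intro sum_mono2 finite_CS) (auto simp: Bad_def)
  also have "\<dots> \<le> \<eta> * t^2 * B * p" by (rule var)
  finally have "real (card Bad) * (p * t / 2) ^ 2 \<le> \<eta> * t^2 * B * p" .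
  moreover have "real (card Bad) * (p^2 * t^2) = 4 * (real (card Bad) * (p * t / 2) ^ 2)"
    by (simp add: power_mult_distrib power_divide)
  ultimately have "real (card Bad) * (p^2 * t^2) \<le> 4 * (\<eta> * t^2 * B * p)"
    by linarith
  moreover have "4 * (\<eta> * t^2 * B * p) = (4 * \<eta> * B / p) * (p^2 * t^2)"
    using p by (simp add: power2_eq_square)
  ultimately have "real (card Bad) * (p^2 * t^2) \<le> (4 * \<eta> * B / p) * (p^2 * t^2)"
    by linarith
  hence "real (card Bad) \<le> 4 * \<eta> * B / p"
    by (rule mult_right_le_imp_le) (use p t in auto)
  also have "\<dots> = 4 * \<eta> * real (card (CS n k))" unfolding cardCS p_def by simp
  finally show ?thesis unfolding Bad_def t_def .
qed



definition Agr :: "nat \<Rightarrow> (nat \<Rightarrow> bool) \<Rightarrow> (nat \<Rightarrow> bool) \<Rightarrow> nat set" where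
  "Agr n x y = {j\<in>{..<n}. x j = y j}"

lemma card_agree_K: "card {K\<in>Ks n k. \<forall>j\<in>K. x j = y j} = card (Agr n x y) choose k"
proof -
  have "{K\<in>Ks n k. \<forall>j\<in>K. x j = y j} = {K. K \<subseteq> Agr n x y \<and> card K = k}"
    unfolding Ks_def Agr_def by blast
  thus ?thesis by (simp add: n_subsets Agr_def)
qed

lemma choose_ratio_nat: "a \<le> n \<Longrightarrow> (a choose k) * n ^ k \<le> (n choose k) * a ^ k"
proof (induction k)
  case 0 thus ?case by simp
next
  case (Suc k)
  have ea: "Suc k * (a choose Suc k) = (a - k) * (a choose k)"
    using binomial_absorption[of k a] binomial_absorb_comp[of a k] by simp
  have en: "Suc k * (n choose Suc k) = (n - k) * (n choose k)"
    using binomial_absorption[of k n] binomial_absorb_comp[of n k] by simp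
  have key: "(a - k) * n \<le> (n - k) * a"
  proof (cases "k \<le> a")
    case True
    have "(a - k) * n = a * n - k * n" by (simp add: diff_mult_distrib)
    also have "\<dots> \<le> a * n - k * a" using Suc.prems by (intro diff_le_mono2 mult_le_mono) auto
    also have "\<dots> = (n - k) * a" by (simp add: diff_mult_distrib diff_mult_distrib2 mult.commute)
    finally show ?thesis .
  qed simp
  have "Suc k * ((a choose Suc k) * n ^ Suc k) = (Suc k * (a choose Suc k)) * (n ^ k * n)"
    by (simp only: mult_ac power_Suc)
  also have "\<dots> = ((a - k) * (a choose k)) * (n ^ k * n)" by (simp only: ea)
  also have "\<dots> = ((a choose k) * n ^ k) * ((a - k) * n)" by (simp only: mult_ac)
  also have "\<dots> \<le> ((n choose k) * a ^ k) * ((n - k) * a)"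
    using Suc.IH[OF Suc.prems] key by (rule mult_le_mono)
  also have "\<dots> = ((n - k) * (n choose k)) * (a ^ k * a)" by (simp only: mult_ac)
  also have "\<dots> = (Suc k * (n choose Suc k)) * (a ^ k * a)" by (simp only: en)
  also have "\<dots> = Suc k * ((n choose Suc k) * a ^ Suc k)" by (simp only: mult_ac power_Suc)
  finally show ?case by (simp only: mult_le_cancel1)
qed

lemma choose_ratio:
  assumes "a \<le> n" "n > 0"
  shows "real (a choose k) \<le> real (n choose k) * (real a / real n) ^ k"
proof -
  have "real (a choose k) * real n ^ k \<le> real (n choose k) * real a ^ k"
    using choose_ratio_nat[OF assms(1), of k] by (metis of_nat_le_iff of_nat_mult of_nat_power)
  thus ?thesis using assms by (simp add: power_divide field_simps)
qed

lemma card_assignments: "card (assignments n) = 2 ^ n"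
  unfolding assignments_def by (simp add: card_PiE)

lemma finite_assignments: "finite (assignments n)"
  unfolding assignments_def by (rule finite_PiE) auto

lemma bij_Agr:
  assumes "x \<in> assignments n"
  shows "bij_betw (Agr n x) (assignments n) (Pow {..<n})"
proof (rule bij_betwI[where g = "\<lambda>D j. if j < n then (if j \<in> D then x j else \<not> x j) else undefined"])
  show "Agr n x \<in> assignments n \<rightarrow> Pow {..<n}" unfolding Agr_def by auto
  show "(\<lambda>D j. if j < n then (if j \<in> D then x j else \<not> x j) else undefined) \<in> Pow {..<n} \<rightarrow> assignments n"
    unfolding assignments_def by (auto simp: PiE_def extensional_def)
  show "(\<lambda>j. if j < n then (if j \<in> Agr n x y then x j else \<not> x j) else undefined) = y"
    if "y \<in> assignments n" for y
    using that unfolding assignments_def Agr_def by (auto simp: fun_eq_iff PiE_def extensional_def)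
  show "Agr n x (\<lambda>j. if j < n then (if j \<in> D then x j else \<not> x j) else undefined) = D"
    if "D \<in> Pow {..<n}" for D
    using that unfolding Agr_def by auto
qed

lemma binomial_half_Pow: "binomial_pmf n (1/2) = map_pmf card (pmf_of_set (Pow {..<n}))"
proof -
  have "binomial_pmf n (1/2) =
      map_pmf (\<lambda>f. card {x\<in>{..<n}. f x}) (Pi_pmf {..<n} False (\<lambda>_. bernoulli_pmf (1/2)))"
    by (rule binomial_pmf_altdef') auto
  also have "\<dots> = map_pmf card (map_pmf (\<lambda>b. {x\<in>{..<n}. b x}) (Pi_pmf {..<n} False (\<lambda>_. bernoulli_pmf (1/2))))"
    by (simp add: pmf.map_comp o_def)
  also have "map_pmf (\<lambda>b. {x\<in>{..<n}. b x}) (Pi_pmf {..<n} False (\<lambda>_. bernoulli_pmf (1/2))) = pmf_of_set (Pow {..<n})"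
    by (rule pmf_of_set_Pow_conv_bernoulli) simp
  finally show ?thesis .
qed

lemma close_count:
  assumes x: "x \<in> assignments n" and n: "n > 0" and g: "\<gamma> \<ge> 0"
  shows "real (card {y\<in>assignments n. (1/2 + \<gamma>) * real n \<le> real (card (Agr n x y))}) \<le> 2 ^ n * exp (- 2 * real n * \<gamma>^2)"
proof -
  let ?M = "pmf_of_set (assignments n)"
  have ne: "assignments n \<noteq> {}" using card_assignments[of n] by (metis card.empty power_not_zero zero_neq_numeral)
  have "map_pmf (Agr n x) ?M = pmf_of_set (Pow {..<n})"
    by (rule map_pmf_of_set_bij_betw[OF bij_Agr[OF x] ne finite_assignments])
  hence "map_pmf card (map_pmf (Agr n x) ?M) = binomial_pmf n (1/2)"
    by (simp add: binomial_half_Pow)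
  hence bm: "map_pmf (\<lambda>y. card (Agr n x y)) ?M = binomial_pmf n (1/2)"
    by (simp add: pmf.map_comp o_def)
  have "measure_pmf.prob (binomial_pmf n (1/2)) {j. 1/2 + \<gamma> \<le> real j / real n} \<le> exp (real_of_int (- 2 * int n) * \<gamma>\<^sup>2)"
    by (rule binomial_distribution.prob_ge') (auto simp: binomial_distribution_def n g)
  also have "real_of_int (- 2 * int n) = - 2 * real n" by simp
  finally have b: "measure_pmf.prob (binomial_pmf n (1/2)) {j. 1/2 + \<gamma> \<le> real j / real n} \<le> exp (- 2 * real n * \<gamma>\<^sup>2)" .
  have "measure_pmf.prob (binomial_pmf n (1/2)) {j. 1/2 + \<gamma> \<le> real j / real n}
      = measure_pmf.prob ?M {y. 1/2 + \<gamma> \<le> real (card (Agr n x y)) / real n}"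
    by (simp add: bm[symmetric])
  also have "\<dots> = real (card {y\<in>assignments n. (1/2 + \<gamma>) * real n \<le> real (card (Agr n x y))}) / 2 ^ n"
  proof -
    have "assignments n \<inter> {y. 1/2 + \<gamma> \<le> real (card (Agr n x y)) / real n}
        = {y\<in>assignments n. (1/2 + \<gamma>) * real n \<le> real (card (Agr n x y))}"
      using n by (auto simp: field_simps)
    thus ?thesis by (simp add: measure_pmf_of_set finite_assignments ne card_assignments)
  qed
  finally have "real (card {y\<in>assignments n. (1/2 + \<gamma>) * real n \<le> real (card (Agr n x y))})
     = 2 ^ n * measure_pmf.prob (binomial_pmf n (1/2)) {j. 1/2 + \<gamma> \<le> real j / real n}"
    by simp
  also have "\<dots> \<le> 2 ^ n * exp (- 2 * real n * \<gamma>\<^sup>2)"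
    using b by (intro mult_left_mono) auto
  finally show ?thesis .
qed



lemma coll_bound:
  assumes kn: "k \<le> n" and n: "n > 0" and T: "T \<subseteq> assignments n"
    and A: "A > 0" and tA: "real (card T) \<ge> A" and g: "\<gamma> \<ge> 0" and eta: "\<eta> \<ge> 0"
    and H1: "(1/2 + \<gamma>) ^ k \<le> (1 + \<eta>/2) / 2 ^ k"
    and H2: "2 ^ n * exp (- 2 * real n * \<gamma>^2) \<le> (\<eta>/2) * A / 2 ^ k"
  shows "(\<Sum>x\<in>T. \<Sum>y\<in>T. real (card {K\<in>Ks n k. \<forall>j\<in>K. x j = y j}))
           \<le> (1 + \<eta>) * real (card T) ^ 2 * real (n choose k) / 2 ^ k"
proof -
  define C where "C = real (n choose k)"
  define t where "t = real (card T)"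
  have finT: "finite T" using T finite_assignments finite_subset by blast
  have C0: "C \<ge> 0" unfolding C_def by simp
  have row: "(\<Sum>y\<in>T. real (card {K\<in>Ks n k. \<forall>j\<in>K. x j = y j})) \<le> (1 + \<eta>) * t * C / 2 ^ k"
    if x: "x \<in> T" for x
  proof -
    define close where "close y \<longleftrightarrow> (1/2 + \<gamma>) * real n \<le> real (card (Agr n x y))" for y
    have pt: "real (card {K\<in>Ks n k. \<forall>j\<in>K. x j = y j}) \<le> C * (1 + \<eta>/2) / 2 ^ k + (if close y then C else 0)"
      for y
    proof -
      have aN: "card (Agr n x y) \<le> n" 
      proof -
        have "card (Agr n x y) \<le> card {..<n}" unfolding Agr_def by (rule card_mono) auto
        thus ?thesis by simp
      qed
      have e: "real (card {K\<in>Ks n k. \<forall>j\<in>K. x j = y j}) = real (card (Agr n x y) choose k)"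
        by (simp add: card_agree_K)
      show ?thesis
      proof (cases "close y")
        case True
        have "real (card (Agr n x y) choose k) \<le> C"
          unfolding C_def using binomial_right_mono[OF aN] by simp
        moreover have "C * (1 + \<eta>/2) / 2 ^ k \<ge> 0" using C0 eta by simp
        ultimately show ?thesis using True e by simp
      next
        case False
        have "real (card (Agr n x y) choose k) \<le> C * (real (card (Agr n x y)) / real n) ^ k"
          unfolding C_def by (rule choose_ratio[OF aN n])
        also have "\<dots> \<le> C * (1/2 + \<gamma>) ^ k"
        proof (intro mult_left_mono power_mono C0)
          show "real (card (Agr n x y)) / real n \<le> 1/2 + \<gamma>"
            using False n unfolding close_def by (simp add: divide_le_eq mult.commute)
        qed simp
        also have "\<dots> \<le> C * ((1 + \<eta>/2) / 2 ^ k)" using H1 C0 by (rule mult_left_mono)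
        finally show ?thesis using False e by simp
      qed
    qed
    have "(\<Sum>y\<in>T. real (card {K\<in>Ks n k. \<forall>j\<in>K. x j = y j}))
        \<le> (\<Sum>y\<in>T. C * (1 + \<eta>/2) / 2 ^ k + (if close y then C else 0))"
      by (intro sum_mono pt)
    also have "\<dots> = t * (C * (1 + \<eta>/2) / 2 ^ k) + C * real (card {y\<in>T. close y})"
      unfolding t_def using finT by (simp add: sum.distrib sum.If_cases Int_def)
    also have "real (card {y\<in>T. close y}) \<le> real (card {y\<in>assignments n. close y})"
      using T finite_assignments by (intro of_nat_mono card_mono) auto
    also have "\<dots> \<le> 2 ^ n * exp (- 2 * real n * \<gamma>^2)"
      unfolding close_def by (rule close_count[OF _ n g]) (use x T in blast)
    also have "\<dots> \<le> (\<eta>/2) * t / 2 ^ k"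
      using H2 tA eta unfolding t_def by (smt (verit) divide_right_mono mult_left_mono zero_le_divide_iff zero_le_power)
    finally have "(\<Sum>y\<in>T. real (card {K\<in>Ks n k. \<forall>j\<in>K. x j = y j}))
        \<le> t * (C * (1 + \<eta>/2) / 2 ^ k) + C * ((\<eta>/2) * t / 2 ^ k)"
      using C0 by (simp add: mult_left_mono)
    also have "\<dots> = (1 + \<eta>) * t * C / 2 ^ k" by (simp add: field_simps)
    finally show ?thesis .
  qed
  have "(\<Sum>x\<in>T. \<Sum>y\<in>T. real (card {K\<in>Ks n k. \<forall>j\<in>K. x j = y j})) \<le> (\<Sum>x\<in>T. (1 + \<eta>) * t * C / 2 ^ k)"
    by (intro sum_mono row)
  also have "\<dots> = (1 + \<eta>) * t ^ 2 * C / 2 ^ k" unfolding t_def by (simp add: power2_eq_square)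
  finally show ?thesis unfolding t_def C_def .
qed

lemma step_bound:
  assumes kn: "k \<le> n" and n: "n > 0" and T: "T \<subseteq> assignments n"
    and A: "A > 0" and tA: "real (card T) \<ge> A" and g: "\<gamma> \<ge> 0" and eta: "\<eta> \<ge> 0"
    and H1: "(1/2 + \<gamma>) ^ k \<le> (1 + \<eta>/2) / 2 ^ k"
    and H2: "2 ^ n * exp (- 2 * real n * \<gamma>^2) \<le> (\<eta>/2) * A / 2 ^ k"
  shows "measure_pmf.prob (random_clause n k) {C. real (fc T C) < real (card T) / 2 ^ k / 2} \<le> 4 * \<eta>"
proof -
  have finT: "finite T" using T finite_assignments finite_subset by blast
  have tpos: "card T > 0" using tA A by linarith
  have cc: "real (card {C\<in>CS n k. real (fc T C) < real (card T) / 2 ^ k / 2}) \<le> 4 * \<eta> * real (card (CS n k))"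
    by (rule cheb_count[OF finT tpos kn eta coll_bound[OF kn n T A tA g eta H1 H2]])
  have cpos: "real (card (CS n k)) > 0" using kn by (simp add: card_CS)
  have ne: "CS n k \<noteq> {}" using cpos by auto
  have "measure_pmf.prob (random_clause n k) {C. real (fc T C) < real (card T) / 2 ^ k / 2}
      = real (card {C\<in>CS n k. real (fc T C) < real (card T) / 2 ^ k / 2}) / real (card (CS n k))"
    unfolding rc_eq[OF kn] using finite_CS ne by (simp add: measure_pmf_of_set Int_def)
  also have "\<dots> \<le> 4 * \<eta>" using cc cpos by (simp add: divide_le_eq)
  finally show ?thesis .
qed



lemma seq_bound:
  fixes Q :: "'a pmf" and P :: "nat \<Rightarrow> (nat \<Rightarrow> 'a) \<Rightarrow> bool"
  assumes loc: "\<And>i f g. (\<And>j. j \<le> i \<Longrightarrow> f j = g j) \<Longrightarrow> P i f = P i g"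
    and bnd: "\<And>i f. measure_pmf.prob Q {c. P i (f(i:=c))} \<le> \<theta>" and th: "\<theta> \<ge> 0"
  shows "B \<subseteq> {..<m} \<Longrightarrow> measure_pmf.prob (Pi_pmf {..<m} d (\<lambda>_. Q)) {f. \<forall>i\<in>B. P i f} \<le> \<theta> ^ card B"
proof (induction m arbitrary: B)
  case 0
  hence "B = {}" by auto
  thus ?case by simp
next
  case (Suc m)
  define M where "M = Pi_pmf {..<m} d (\<lambda>_. Q)"
  define B' where "B' = B - {m}"
  have B': "B' \<subseteq> {..<m}" using Suc.prems unfolding B'_def by auto
  have IH: "measure_pmf.prob M {f. \<forall>i\<in>B'. P i f} \<le> \<theta> ^ card B'"
    using Suc.IH[OF B'] unfolding M_def .
  define c where "c = (if m \<in> B then \<theta> else 1)"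
  have c0: "c \<ge> 0" unfolding c_def using th by simp
  have eqPi: "Pi_pmf {..<Suc m} d (\<lambda>_. Q) = bind_pmf M (\<lambda>f. map_pmf (\<lambda>y. f(m:=y)) Q)"
  proof -
    have "Pi_pmf {..<Suc m} d (\<lambda>_. Q) = Pi_pmf (insert m {..<m}) d (\<lambda>_. Q)" by (simp add: lessThan_Suc)
    also have "\<dots> = do {y \<leftarrow> Q; f \<leftarrow> M; return_pmf (f(m:=y))}"
      unfolding M_def by (rule Pi_pmf_insert') auto
    also have "\<dots> = do {f \<leftarrow> M; y \<leftarrow> Q; return_pmf (f(m:=y))}" by (rule bind_commute_pmf)
    also have "\<dots> = bind_pmf M (\<lambda>f. map_pmf (\<lambda>y. f(m:=y)) Q)" by (simp add: map_pmf_def)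
    finally show ?thesis .
  qed
  define E where "E = {f. \<forall>i\<in>B. P i f}"
  define E' where "E' = {f. \<forall>i\<in>B'. P i f}"
  have pt: "measure_pmf.prob (map_pmf (\<lambda>y. f(m:=y)) Q) E \<le> c * indicator E' f" for f
  proof (cases "f \<in> E'")
    case False
    then obtain i where i: "i \<in> B'" "\<not> P i f" unfolding E'_def by auto
    have "i < m" using i B' by auto
    have "P i (f(m:=y)) = P i f" for y by (rule loc) (use \<open>i<m\<close> in auto)
    hence "(\<lambda>y. f(m:=y)) -` E = {}" using i unfolding B'_def E_def by auto
    thus ?thesis using False by simp
  next
    case True
    have "(\<lambda>y. f(m:=y)) -` E \<subseteq> {y. m \<in> B \<longrightarrow> P m (f(m:=y))}" unfolding E_def by auto
    hence le: "measure_pmf.prob Q ((\<lambda>y. f(m:=y)) -` E) \<le> measure_pmf.prob Q {y. m \<in> B \<longrightarrow> P m (f(m:=y))}"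
      by (rule measure_pmf.finite_measure_mono) simp
    show ?thesis
    proof (cases "m \<in> B")
      case True
      thus ?thesis using le bnd[of m f] \<open>f \<in> E'\<close> unfolding c_def by simp
    next
      case False
      thus ?thesis using \<open>f \<in> E'\<close> unfolding c_def by simp
    qed
  qed
  have "ennreal (measure_pmf.prob (Pi_pmf {..<Suc m} d (\<lambda>_. Q)) E)
      = emeasure (measure_pmf (Pi_pmf {..<Suc m} d (\<lambda>_. Q))) E"
    by (simp add: measure_pmf.emeasure_eq_measure)
  also have "\<dots> = (\<integral>\<^sup>+f. emeasure (measure_pmf (map_pmf (\<lambda>y. f(m:=y)) Q)) E \<partial>M)"
    unfolding eqPi by simp
  also have "\<dots> \<le> (\<integral>\<^sup>+f. ennreal c * indicator E' f \<partial>M)"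
  proof (intro nn_integral_mono)
    fix f
    have "emeasure (measure_pmf (map_pmf (\<lambda>y. f(m:=y)) Q)) E = ennreal (measure_pmf.prob (map_pmf (\<lambda>y. f(m:=y)) Q) E)"
      by (simp add: measure_pmf.emeasure_eq_measure)
    also have "\<dots> \<le> ennreal (c * indicator E' f)" by (rule ennreal_leI[OF pt])
    also have "\<dots> = ennreal c * indicator E' f"
      by (simp add: ennreal_mult c0 indicator_def)
    finally show "emeasure (measure_pmf (map_pmf (\<lambda>y. f(m:=y)) Q)) E \<le> ennreal c * indicator E' f" .
  qed
  also have "\<dots> = ennreal c * emeasure (measure_pmf M) E'"
    by (rule nn_integral_cmult_indicator) simp
  also have "\<dots> = ennreal (c * measure_pmf.prob M E')"
    by (simp add: measure_pmf.emeasure_eq_measure ennreal_mult c0)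
  also have "\<dots> \<le> ennreal (c * \<theta> ^ card B')"
    by (intro ennreal_leI mult_left_mono IH[unfolded E'_def[symmetric]] c0)
  also have "c * \<theta> ^ card B' = \<theta> ^ card B"
  proof (cases "m \<in> B")
    case True
    have fin: "finite B" using Suc.prems finite_subset by blast
    have "card B = Suc (card B')" using card_Suc_Diff1[OF fin True] unfolding B'_def by simp
    thus ?thesis using True unfolding c_def by simp
  next
    case False
    hence "B' = B" unfolding B'_def by simp
    thus ?thesis using False unfolding c_def by simp
  qed
  finally have "ennreal (measure_pmf.prob (Pi_pmf {..<Suc m} d (\<lambda>_. Q)) E) \<le> ennreal (\<theta> ^ card B)" .
  thus ?case unfolding E_def using th by (simp add: ennreal_le_iff)
qed



definition Sset :: "nat \<Rightarrow> nat \<Rightarrow> (nat \<Rightarrow> clause) \<Rightarrow> (nat \<Rightarrow> bool) set" where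
  "Sset n i Cs = {x\<in>assignments n. \<forall>j<i. clause_val (Cs j) x}"

definition bad :: "nat \<Rightarrow> nat \<Rightarrow> real \<Rightarrow> nat \<Rightarrow> (nat \<Rightarrow> clause) \<Rightarrow> bool" where
  "bad n k A i Cs \<longleftrightarrow> real (card (Sset n i Cs)) \<ge> A \<and>
      real (fc (Sset n i Cs) (Cs i)) < real (card (Sset n i Cs)) / 2 ^ k / 2"

lemma Sset_loc: "(\<And>j. j < i \<Longrightarrow> f j = g j) \<Longrightarrow> Sset n i f = Sset n i g"
  unfolding Sset_def by auto

lemma bad_loc: "(\<And>j. j \<le> i \<Longrightarrow> f j = g j) \<Longrightarrow> bad n k A i f = bad n k A i g"
proof -
  assume h: "\<And>j. j \<le> i \<Longrightarrow> f j = g j"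
  have "Sset n i f = Sset n i g" by (rule Sset_loc) (simp add: h)
  moreover have "f i = g i" by (simp add: h)
  ultimately show ?thesis unfolding bad_def by simp
qed

lemma Sset_Suc: "Sset n (Suc i) Cs = {x\<in>Sset n i Cs. clause_val (Cs i) x}"
  unfolding Sset_def using less_Suc_eq by auto

lemma finite_Sset: "finite (Sset n i Cs)"
  unfolding Sset_def using finite_assignments by simp

lemma card_Sset_Suc: "real (card (Sset n (Suc i) Cs)) = real (card (Sset n i Cs)) - real (fc (Sset n i Cs) (Cs i))"
proof -
  have "Sset n i Cs = Sset n (Suc i) Cs \<union> {x\<in>Sset n i Cs. \<not> clause_val (Cs i) x}"
    "Sset n (Suc i) Cs \<inter> {x\<in>Sset n i Cs. \<not> clause_val (Cs i) x} = {}"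
    unfolding Sset_Suc by auto
  hence "card (Sset n i Cs) = card (Sset n (Suc i) Cs) + fc (Sset n i Cs) (Cs i)"
    unfolding fc_def by (metis card_Un_disjoint finite_Sset finite_Un)
  thus ?thesis by simp
qed

lemma Sset_anti: "i \<le> j \<Longrightarrow> Sset n j Cs \<subseteq> Sset n i Cs"
  unfolding Sset_def by auto

lemma det_bound:
  assumes p: "0 \<le> q" "q \<le> 1"
  shows "real (card (Sset n i Cs)) \<le> 2 ^ n * (1 - q) ^ card {j. j < i \<and>
     real (card (Sset n j Cs)) \<ge> A \<and> real (fc (Sset n j Cs) (Cs j)) \<ge> q * real (card (Sset n j Cs))}"
proof (induction i)
  case 0
  have "card (Sset n 0 Cs) \<le> card (assignments n)" unfolding Sset_def
    by (rule card_mono[OF finite_assignments]) auto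
  thus ?case by (simp add: card_assignments)
next
  case (Suc i)
  define G where "G j \<longleftrightarrow> real (card (Sset n j Cs)) \<ge> A \<and> real (fc (Sset n j Cs) (Cs j)) \<ge> q * real (card (Sset n j Cs))" for j
  have IH: "real (card (Sset n i Cs)) \<le> 2 ^ n * (1 - q) ^ card {j. j < i \<and> G j}"
    using Suc.IH unfolding G_def .
  have q0: "0 \<le> 1 - q" "1 - q \<le> 1" using p by auto
  show ?case unfolding G_def[symmetric]
  proof (cases "G i")
    case True
    have eq: "{j. j < Suc i \<and> G j} = insert i {j. j < i \<and> G j}" using True less_Suc_eq by auto
    have "real (card (Sset n (Suc i) Cs)) \<le> (1 - q) * real (card (Sset n i Cs))"
      using True unfolding card_Sset_Suc G_def by (simp add: algebra_simps)
    also have "\<dots> \<le> (1 - q) * (2 ^ n * (1 - q) ^ card {j. j < i \<and> G j})"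
      using IH q0 by (intro mult_left_mono) auto
    also have "\<dots> = 2 ^ n * (1 - q) ^ card {j. j < Suc i \<and> G j}"
      unfolding eq by simp
    finally show "real (card (Sset n (Suc i) Cs)) \<le> 2 ^ n * (1 - q) ^ card {j. j < Suc i \<and> G j}" .
  next
    case False
    have eq: "{j. j < Suc i \<and> G j} = {j. j < i \<and> G j}" using False less_Suc_eq by auto
    have "real (card (Sset n (Suc i) Cs)) \<le> real (card (Sset n i Cs))"
      unfolding card_Sset_Suc by simp
    also have "\<dots> \<le> 2 ^ n * (1 - q) ^ card {j. j < Suc i \<and> G j}" using IH unfolding eq .
    finally show "real (card (Sset n (Suc i) Cs)) \<le> 2 ^ n * (1 - q) ^ card {j. j < Suc i \<and> G j}" .
  qed
qed



lemma main_fixed: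
  assumes kn: "k \<le> n" and n: "n > 0" and A: "A > 0" and g: "\<gamma> \<ge> 0"
    and H1: "(1/2 + \<gamma>) ^ k \<le> (1 + (1/64)/2) / 2 ^ k"
    and H2: "2 ^ n * exp (- 2 * real n * \<gamma>^2) \<le> ((1/64)/2) * A / 2 ^ k"
    and H3: "2 ^ n * (1 - 1 / 2 ^ k / 2) ^ (m div 2 + 1) \<le> A"
  shows "measure_pmf.prob (random_formula n k m) {Cs. mu_formula n m Cs > A / 2 ^ n} \<le> (1/2) ^ m"
proof -
  define Q where "Q = random_clause n k"
  define q :: real where "q = 1 / 2 ^ k / 2"
  define h where "h = m - m div 2"
  define Bs where "Bs = {B. B \<subseteq> {..<m} \<and> card B = h}"
  have "(1::real) \<le> 2 ^ k" by (rule one_le_power) simp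
  hence "(1::real) \<le> 2 ^ k * 2" by linarith
  hence q1: "q \<le> 1" unfolding q_def by (simp add: field_simps)
  have q0: "0 \<le> q" unfolding q_def by simp
  note q = q0 q1
  have bnd: "measure_pmf.prob Q {c. bad n k A i (f(i:=c))} \<le> 1/16" for i f
  proof (cases "real (card (Sset n i f)) \<ge> A")
    case True
    have SS: "Sset n i (f(i:=c)) = Sset n i f" for c by (rule Sset_loc) simp
    have "{c. bad n k A i (f(i:=c))} = {c. real (fc (Sset n i f) c) < real (card (Sset n i f)) / 2 ^ k / 2}"
      using True unfolding bad_def SS by simp
    also have "measure_pmf.prob Q \<dots> \<le> 4 * (1/64)"
      unfolding Q_def
      by (rule step_bound[OF kn n _ A True g _ H1 H2]) (auto simp: Sset_def)
    finally show ?thesis by simp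
  next
    case False
    have SS: "Sset n i (f(i:=c)) = Sset n i f" for c by (rule Sset_loc) simp
    have e: "{c. bad n k A i (f(i:=c))} = {}" using False unfolding bad_def SS by simp
    show ?thesis unfolding e by simp
  qed
  have seq: "measure_pmf.prob (random_formula n k m) {f. \<forall>i\<in>B. bad n k A i f} \<le> (1/16) ^ card B"
    if "B \<subseteq> {..<m}" for B
    unfolding random_formula_def Q_def[symmetric]
    by (rule seq_bound[OF bad_loc bnd _ that]) simp_all
  have sub: "{Cs. mu_formula n m Cs > A / 2 ^ n} \<subseteq> (\<Union>B\<in>Bs. {f. \<forall>i\<in>B. bad n k A i f})"
  proof
    fix Cs assume "Cs \<in> {Cs. mu_formula n m Cs > A / 2 ^ n}"
    hence "real (card (Sset n m Cs)) / 2 ^ n > A / 2 ^ n"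
      unfolding mu_formula_def Sset_def by simp
    hence big: "real (card (Sset n m Cs)) > A" by (simp add: divide_less_cancel)
    have bigj: "real (card (Sset n j Cs)) \<ge> A" if "j \<le> m" for j
    proof -
      have "card (Sset n m Cs) \<le> card (Sset n j Cs)"
        by (rule card_mono[OF finite_Sset Sset_anti[OF that]])
      thus ?thesis using big by linarith
    qed
    define Bad where "Bad = {j. j < m \<and> bad n k A j Cs}"
    have cnt: "card Bad \<ge> h"
    proof (rule ccontr)
      assume "\<not> h \<le> card Bad"
      hence lt: "card Bad < h" by simp
      have Geq: "{j. j < m \<and> real (card (Sset n j Cs)) \<ge> A \<and> real (fc (Sset n j Cs) (Cs j)) \<ge> q * real (card (Sset n j Cs))}
          = {..<m} - Bad"
        using bigj unfolding Bad_def bad_def q_def by (auto simp: not_less)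
      have BadSub: "Bad \<subseteq> {..<m}" unfolding Bad_def by auto
      have "card ({..<m} - Bad) = m - card Bad"
        using BadSub by (simp add: card_Diff_subset finite_subset)
      hence cG: "card ({..<m} - Bad) \<ge> m div 2 + 1" using lt unfolding h_def by linarith
      have "real (card (Sset n m Cs)) \<le> 2 ^ n * (1 - q) ^ card ({..<m} - Bad)"
        using det_bound[OF q, of n m Cs A] unfolding Geq .
      also have "\<dots> \<le> 2 ^ n * (1 - q) ^ (m div 2 + 1)"
        using q cG by (intro mult_left_mono power_decreasing) auto
      also have "\<dots> \<le> A" using H3 unfolding q_def .
      finally show False using big by linarith
    qed
    then obtain B where B: "B \<subseteq> Bad" "card B = h" "finite B" by (rule obtain_subset_with_card_n)
    have "B \<in> Bs" using B unfolding Bs_def Bad_def by auto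
    moreover have "\<forall>i\<in>B. bad n k A i Cs" using B unfolding Bad_def by auto
    ultimately show "Cs \<in> (\<Union>B\<in>Bs. {f. \<forall>i\<in>B. bad n k A i f})" by blast
  qed
  have finBs: "finite Bs" unfolding Bs_def by (rule finite_subset[of _ "Pow {..<m}"]) auto
  have cardBs: "card Bs = m choose h" unfolding Bs_def using n_subsets[of "{..<m}" h] by simp
  have "measure_pmf.prob (random_formula n k m) {Cs. mu_formula n m Cs > A / 2 ^ n}
      \<le> measure_pmf.prob (random_formula n k m) (\<Union>B\<in>Bs. {f. \<forall>i\<in>B. bad n k A i f})"
    by (rule measure_pmf.finite_measure_mono[OF sub]) simp
  also have "\<dots> \<le> (\<Sum>B\<in>Bs. measure_pmf.prob (random_formula n k m) {f. \<forall>i\<in>B. bad n k A i f})"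
    by (rule measure_pmf.finite_measure_subadditive_finite[OF finBs]) simp
  also have "\<dots> \<le> (\<Sum>B\<in>Bs. (1/16) ^ h)"
  proof (rule sum_mono)
    fix B assume "B \<in> Bs"
    hence B: "B \<subseteq> {..<m}" "card B = h" unfolding Bs_def by auto
    show "measure_pmf.prob (random_formula n k m) {f. \<forall>i\<in>B. bad n k A i f} \<le> (1/16) ^ h"
      using seq[OF B(1)] unfolding B(2) .
  qed
  also have "\<dots> = real (m choose h) * (1/16) ^ h" using cardBs by simp
  also have "\<dots> \<le> 2 ^ m * (1/4) ^ m"
  proof (rule mult_mono)
    show "real (m choose h) \<le> 2 ^ m"
      using binomial_le_pow2[of m h] by (metis of_nat_le_iff of_nat_numeral of_nat_power)
    have "(1/16::real) ^ h = ((1/4) ^ 2) ^ h" by (simp add: power2_eq_square)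
    also have "\<dots> = (1/4) ^ (2 * h)" by (simp only: power_mult)
    also have "\<dots> \<le> (1/4) ^ m" by (rule power_decreasing) (auto simp: h_def)
    finally show "(1/16::real) ^ h \<le> (1/4) ^ m" .
  qed auto
  also have "\<dots> = (1/2) ^ m" by (simp add: power_mult_distrib[symmetric])
  finally show ?thesis .
qed



lemma ln2_le: "ln (2::real) \<le> 9/10"
proof -
  have "(1 + (9/10) / real (2::nat)) ^ 2 \<le> exp (9/10::real)"
    by (rule exp_ge_one_plus_x_over_n_power_n) auto
  hence "(2::real) \<le> exp (9/10)" by (simp add: power2_eq_square)
  thus ?thesis by (metis exp_gt_zero ln_exp ln_le_cancel_iff zero_less_numeral)
qed

lemma ln2_le1: "ln (2::real) \<le> 1"
  using ln2_le by simp

lemma exp_small: "exp (1/200::real) \<le> 1 + 1/128"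
proof -
  have "1 - 1/200 \<le> exp (- (1/200::real))" using exp_ge_add_one_self[of "- (1/200::real)"] by simp
  hence "exp (1/200::real) * (1 - 1/200) \<le> exp (1/200) * exp (- (1/200))"
    by (intro mult_left_mono) auto
  also have "\<dots> = 1" by (simp add: exp_minus)
  finally have "exp (1/200::real) \<le> 1 / (1 - 1/200)" by (simp add: field_simps)
  also have "\<dots> \<le> 1 + 1/128" by simp
  finally show ?thesis .
qed

lemma pointwise:
  fixes \<delta> :: real and N m :: nat
  assumes \<delta>: "0 < \<delta>" "\<delta> < 1/20"
    and kdef: "k = nat \<lfloor>(1 + \<delta>) * log 2 (real N)\<rfloor>"
    and ndef: "n = nat \<lfloor>(1/2 + \<delta>) * real N\<rfloor>"
    and N4: "real N \<ge> 4"
    and EV1: "2 * log 2 (real N) \<le> real N / 2 - 1"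
    and EV2: "(real N / 2 - 1) / (80000 * (2 * log 2 (real N))^2) \<ge> real N powr (1/16) + 7 + 2 * log 2 (real N)"
    and M1: "real m \<ge> 4 * 2 ^ k * real N powr \<delta>"
  shows "measure_pmf.prob (random_formula n k m) {Cs. mu_formula n m Cs > exp (- (real n powr \<delta>))}
           \<le> 2 powr (- 2 * real N)"
proof -
  define x where "x = real N"
  define L where "L = log 2 x"
  have x4: "x \<ge> 4" using N4 unfolding x_def .
  have L2: "L \<ge> 2" unfolding L_def using x4 by (subst le_log_iff) auto
  have y0: "(1 + \<delta>) * L \<ge> 0" using L2 \<delta> by simp
  have kfl: "real k = of_int \<lfloor>(1 + \<delta>) * L\<rfloor>" unfolding kdef L_def x_def using y0[unfolded L_def x_def] by simp
  have kup: "real k \<le> (1 + \<delta>) * L" unfolding kfl by simp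
  have klow: "real k \<ge> (1 + \<delta>) * L - 1" unfolding kfl by linarith
  have h1: "(1 + \<delta>) * L \<le> 2 * L" using L2 \<delta> by (intro mult_right_mono) auto
  have h2: "1 * L \<le> (1 + \<delta>) * L" using L2 \<delta> by (intro mult_right_mono) auto
  have kup2: "real k \<le> 2 * L" using kup h1 by linarith
  have k1r: "real k \<ge> 1" using klow h2 L2 by linarith
  hence k1: "k \<ge> 1" by simp
  have z0: "(1/2 + \<delta>) * x \<ge> 0" using x4 \<delta> by simp
  have nfl: "real n = of_int \<lfloor>(1/2 + \<delta>) * x\<rfloor>" unfolding ndef x_def using z0[unfolded x_def] by simp
  have h3: "(1/2 + \<delta>) * x \<le> 1 * x" using x4 \<delta> by (intro mult_right_mono) auto
  have h4: "(1/2) * x \<le> (1/2 + \<delta>) * x" using x4 \<delta> by (intro mult_right_mono) auto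
  have nup: "real n \<le> x" unfolding nfl using h3 of_int_floor_le[of "(1/2 + \<delta>) * x"] by linarith
  have nlow: "real n \<ge> x / 2 - 1" unfolding nfl using h4 real_of_int_floor_gt_diff_one[of "(1/2 + \<delta>) * x"] by linarith
  have kn: "k \<le> n" using kup2 EV1 nlow unfolding L_def x_def by linarith
  have npos: "n > 0" using nlow x4 by simp
  define \<gamma> :: real where "\<gamma> = 1 / (400 * real k)"
  have g0: "\<gamma> \<ge> 0" unfolding \<gamma>_def by simp
  have kpos: "real k > 0" using k1r by simp
  have H1: "(1/2 + \<gamma>) ^ k \<le> (1 + (1/64)/2) / 2 ^ k"
  proof -
    have "1/2 + \<gamma> = (1 + (1/200) / real k) / 2"
      unfolding \<gamma>_def using kpos by (simp add: field_simps)
    hence "(1/2 + \<gamma>) ^ k = (1 + (1/200) / real k) ^ k / 2 ^ k"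
      by (simp only: power_divide)
    also have "(1 + (1/200) / real k) ^ k \<le> exp (1/200)"
      by (rule exp_ge_one_plus_x_over_n_power_n) (use k1 in auto)
    hence "(1 + (1/200) / real k) ^ k / 2 ^ k \<le> exp (1/200) / 2 ^ k" by (simp add: divide_right_mono)
    also have "\<dots> \<le> (1 + 1/128) / 2 ^ k" using exp_small by (rule divide_right_mono) simp
    finally show ?thesis by simp
  qed
  define A where "A = exp (- (real n powr \<delta>)) * 2 ^ n"
  have A0: "A > 0" unfolding A_def by simp
  have H2: "2 ^ n * exp (- 2 * real n * \<gamma>^2) \<le> ((1/64)/2) * A / 2 ^ k"
  proof -
    have e1: "real n powr \<delta> \<le> x powr (1/16)"
    proof -
      have "real n powr \<delta> \<le> x powr \<delta>" using nup \<delta> by (intro powr_mono2) auto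
      also have "\<dots> \<le> x powr (1/16)" using x4 \<delta> by (intro powr_mono) auto
      finally show ?thesis .
    qed
    have e2: "(x / 2 - 1) / (80000 * (2 * L)^2) \<le> real n / (80000 * real k ^ 2)"
    proof (rule frac_le)
      show "0 \<le> real n" by simp
      show "x / 2 - 1 \<le> real n" by (rule nlow)
      show "0 < 80000 * real k ^ 2" using kpos by simp
      have "real k ^ 2 \<le> (2 * L) ^ 2" using kpos kup2 by (intro power_mono) auto
      thus "80000 * real k ^ 2 \<le> 80000 * (2 * L) ^ 2" by simp
    qed
    have ln128: "ln (128::real) \<le> 7"
    proof -
      have "ln (128::real) = ln (2 ^ 7)" by simp
      also have "\<dots> = 7 * ln 2" by (subst ln_realpow) auto
      finally show ?thesis using ln2_le1 by simp
    qed
    have "real n powr \<delta> + ln 128 + real k * ln 2 \<le> real n / (80000 * real k ^ 2)"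
    proof -
      have "real k * ln 2 \<le> real k" using ln2_le1 kpos by (simp add: mult_left_le)
      hence "real n powr \<delta> + ln 128 + real k * ln 2 \<le> x powr (1/16) + 7 + 2 * L"
        using e1 ln128 kup2 by linarith
      also have "\<dots> \<le> (x / 2 - 1) / (80000 * (2 * L)^2)" using EV2 unfolding x_def L_def .
      also have "\<dots> \<le> real n / (80000 * real k ^ 2)" by (rule e2)
      finally show ?thesis .
    qed
    moreover have "2 * real n * \<gamma>^2 = real n / (80000 * real k ^ 2)"
      unfolding \<gamma>_def by (simp add: power2_eq_square)
    ultimately have ineq: "- 2 * real n * \<gamma>^2 \<le> - (real n powr \<delta>) - ln 128 - real k * ln 2" by linarith
    have "exp (- 2 * real n * \<gamma>^2) \<le> exp (- (real n powr \<delta>) - ln 128 - real k * ln 2)"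
      using ineq by simp
    also have "\<dots> = exp (- (real n powr \<delta>)) / (128 * 2 ^ k)"
    proof -
      have "exp (real k * ln 2) = (2::real) ^ k" by (simp add: exp_of_nat_mult)
      thus ?thesis by (simp add: exp_diff)
    qed
    finally have "exp (- 2 * real n * \<gamma>^2) \<le> exp (- (real n powr \<delta>)) / (128 * 2 ^ k)" .
    hence "2 ^ n * exp (- 2 * real n * \<gamma>^2) \<le> 2 ^ n * (exp (- (real n powr \<delta>)) / (128 * 2 ^ k))"
      by (intro mult_left_mono) auto
    also have "\<dots> = ((1/64)/2) * A / 2 ^ k" unfolding A_def by simp
    finally show ?thesis .
  qed
  have H3: "2 ^ n * (1 - 1 / 2 ^ k / 2) ^ (m div 2 + 1) \<le> A"
  proof -
    define q :: real where "q = 1 / 2 ^ k / 2"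
    have q0: "q \<ge> 0" unfolding q_def by simp
    have "(1::real) \<le> 2 ^ k" by (rule one_le_power) simp
    hence "(1::real) \<le> 2 ^ k * 2" by linarith
    hence q1: "q \<le> 1" unfolding q_def by (simp add: field_simps)
    have "(1 - q) ^ (m div 2 + 1) \<le> exp (- q) ^ (m div 2 + 1)"
      using q1 exp_ge_add_one_self[of "- q"] by (intro power_mono) auto
    also have "\<dots> = exp (- q * real (m div 2 + 1))"
      by (subst exp_of_nat_mult[symmetric]) (simp add: mult.commute)
    also have "\<dots> \<le> exp (- (real n powr \<delta>))"
    proof -
      have "real (m div 2 + 1) \<ge> real m / 2" by linarith
      hence "q * real (m div 2 + 1) \<ge> q * (real m / 2)" using q0 by (intro mult_left_mono) auto
      also have "q * (real m / 2) = real m / (4 * 2 ^ k)" unfolding q_def by simp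
      also have "real m / (4 * 2 ^ k) \<ge> real N powr \<delta>" using M1 by (simp add: field_simps)
      hence "real m / (4 * 2 ^ k) \<ge> real n powr \<delta>"
        using nup \<delta> powr_mono2[of \<delta> "real n" x] unfolding x_def by linarith
      finally show ?thesis by simp
    qed
    finally have "(1 - q) ^ (m div 2 + 1) \<le> exp (- (real n powr \<delta>))" .
    hence "2 ^ n * (1 - q) ^ (m div 2 + 1) \<le> 2 ^ n * exp (- (real n powr \<delta>))"
      by (intro mult_left_mono) auto
    thus ?thesis unfolding A_def q_def by (simp add: mult.commute)
  qed
  have main: "measure_pmf.prob (random_formula n k m) {Cs. mu_formula n m Cs > A / 2 ^ n} \<le> (1/2) ^ m"
    by (rule main_fixed[OF kn npos A0 g0 H1 H2 H3])
  have AA: "A / 2 ^ n = exp (- (real n powr \<delta>))" unfolding A_def by simp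
  have "2 ^ k \<ge> x / 2"
  proof -
    have "x / 2 = 2 powr (L - 1)" unfolding L_def using x4 by (simp add: powr_diff)
    also have "\<dots> \<le> 2 powr real k" using klow h2
      by (intro powr_mono) auto
    also have "\<dots> = 2 ^ k" by (simp add: powr_realpow)
    finally show ?thesis .
  qed
  moreover have "real N powr \<delta> \<ge> 1" using x4 \<delta> unfolding x_def by (intro ge_one_powr_ge_zero) auto
  ultimately have "4 * 2 ^ k * real N powr \<delta> \<ge> 4 * (x / 2) * 1"
    using x4 by (intro mult_mono) auto
  hence "real m \<ge> 2 * x" using M1 by linarith
  hence m2: "2 * N \<le> m" unfolding x_def by linarith
  have "(1/2::real) ^ m \<le> (1/2) ^ (2 * N)" by (rule power_decreasing[OF m2]) auto
  also have "\<dots> = 2 powr (- 2 * real N)"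
    by (simp add: powr_minus powr_realpow[symmetric] power_divide inverse_eq_divide)
  finally show ?thesis using main unfolding AA by linarith
qed



lemma rho_pos:
  fixes \<delta> :: real
  assumes "0 < \<delta>" "\<delta> < 1/20"
  shows "(1 + \<delta>) * log 2 ((1 + 2*\<delta>) / 2) + 1 - \<delta> > 0"
proof -
  have "log 2 ((1 + 2*\<delta>) / 2) = log 2 (1 + 2*\<delta>) - log 2 2"
    using assms by (intro log_divide_pos) auto
  hence l: "log 2 ((1 + 2*\<delta>) / 2) = ln (1 + 2*\<delta>) / ln 2 - 1"
    by (simp add: log_def)
  have ln1: "ln (1 + 2*\<delta>) \<ge> 2*\<delta> - (2*\<delta>)^2"
    using ln_one_plus_pos_lower_bound[of "2*\<delta>"] assms by simp
  have p: "(1 + \<delta>) * (1 - 2*\<delta>) > 9/10"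
  proof -
    have "\<delta> * \<delta> < 1/20 * (1/20)" using assms by (intro mult_strict_mono) auto
    hence "(1 + \<delta>) * (1 - 2*\<delta>) = 1 - \<delta> - 2 * (\<delta> * \<delta>)" by (simp add: algebra_simps)
    thus ?thesis using \<open>\<delta> * \<delta> < 1/20 * (1/20)\<close> assms by linarith
  qed
  have d: "(1 + \<delta>) * ln (1 + 2*\<delta>) \<ge> (1 + \<delta>) * (2*\<delta> - (2*\<delta>)^2)"
    using ln1 assms by (intro mult_left_mono) auto
  have c: "(1 + \<delta>) * (2*\<delta> - (2*\<delta>)^2) = (2*\<delta>) * ((1 + \<delta>) * (1 - 2*\<delta>))"
    by (simp add: algebra_simps power2_eq_square)
  have b: "(2*\<delta>) * ((1 + \<delta>) * (1 - 2*\<delta>)) > (2*\<delta>) * (9/10)" using p assms by (intro mult_strict_left_mono) auto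
  have a: "(2*\<delta>) * (9/10) \<ge> (2*\<delta>) * ln 2" using ln2_le assms by (intro mult_left_mono) auto
  have key: "(1 + \<delta>) * ln (1 + 2*\<delta>) > 2 * \<delta> * ln 2" using a b c d by linarith
  have ln2: "ln (2::real) > 0" by simp
  have "(1 + \<delta>) * log 2 ((1 + 2*\<delta>) / 2) + 1 - \<delta> = ((1 + \<delta>) * ln (1 + 2*\<delta>) - 2 * \<delta> * ln 2) / ln 2"
    unfolding l using ln2 by (simp add: field_simps)
  also have "\<dots> > 0" using key ln2 by simp
  finally show ?thesis .
qed

lemma M1_point:
  fixes \<delta> \<epsilon> x :: real and m k :: nat
  assumes \<delta>: "0 < \<delta>" "\<delta> < 1/20" and \<epsilon>: "\<epsilon> > 0" and x: "x \<ge> 4"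
    and kdef: "k = nat \<lfloor>(1 + \<delta>) * log 2 x\<rfloor>"
    and rdef: "\<rho> = (1 + \<delta>) * log 2 ((1 + 2*\<delta>) / 2) + 1 - \<delta>"
    and ev5: "\<epsilon> / 8 * x powr \<rho> \<ge> 1"
    and mg: "real m \<ge> \<epsilon> * (1 + 2*\<delta>) ^ k * x / 2"
  shows "real m \<ge> 4 * 2 ^ k * x powr \<delta>"
proof -
  define r where "r = (1 + 2*\<delta>) / 2"
  define L where "L = log 2 x"
  have r0: "0 < r" "r \<le> 1" unfolding r_def using \<delta> by auto
  have L0: "L \<ge> 0" unfolding L_def using x by simp
  have kup: "real k \<le> (1 + \<delta>) * L"
  proof -
    have "(1 + \<delta>) * L \<ge> 0" using L0 \<delta> by simp
    hence "real k = of_int \<lfloor>(1 + \<delta>) * L\<rfloor>" unfolding kdef L_def by simp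
    thus ?thesis by simp
  qed
  have rk: "r ^ k \<ge> x powr ((1 + \<delta>) * log 2 r)"
  proof -
    have "r ^ k = r powr real k" using r0 by (simp add: powr_realpow)
    also have "\<dots> \<ge> r powr ((1 + \<delta>) * L)" using kup r0 by (intro powr_mono') auto
    also have "r powr ((1 + \<delta>) * L) = x powr ((1 + \<delta>) * log 2 r)"
    proof -
      have "(1 + \<delta>) * L * ln r = (1 + \<delta>) * log 2 r * ln x"
        unfolding L_def log_def by simp
      thus ?thesis using r0 x unfolding powr_def by simp
    qed
    finally show ?thesis .
  qed
  have e1: "(1 + 2*\<delta>) ^ k = 2 ^ k * r ^ k" unfolding r_def by (simp add: power_divide)
  have e2: "x * x powr ((1 + \<delta>) * log 2 r) = x powr \<delta> * x powr \<rho>"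
  proof -
    have "x * x powr ((1 + \<delta>) * log 2 r) = x powr (1 + (1 + \<delta>) * log 2 r)"
      using x by (simp add: powr_add)
    also have "1 + (1 + \<delta>) * log 2 r = \<delta> + \<rho>" unfolding rdef r_def by simp
    also have "x powr (\<delta> + \<rho>) = x powr \<delta> * x powr \<rho>" by (simp add: powr_add)
    finally show ?thesis .
  qed
  have "\<epsilon> * (1 + 2*\<delta>) ^ k * x / 2 = (\<epsilon> / 2) * 2 ^ k * (r ^ k * x)" unfolding e1 by simp
  also have "\<dots> \<ge> (\<epsilon> / 2) * 2 ^ k * (x powr ((1 + \<delta>) * log 2 r) * x)"
    using rk x \<epsilon> by (intro mult_left_mono mult_right_mono) auto
  also have "(\<epsilon> / 2) * 2 ^ k * (x powr ((1 + \<delta>) * log 2 r) * x) = 2 ^ k * x powr \<delta> * ((\<epsilon> / 2) * x powr \<rho>)"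
    using e2 by (simp add: algebra_simps)
  also have "\<dots> \<ge> 2 ^ k * x powr \<delta> * 4"
    using ev5 by (intro mult_left_mono) auto
  finally show ?thesis using mg by simp
qed



lemma main_asym:
  fixes \<delta> \<epsilon> :: real and m :: "nat \<Rightarrow> nat"
  assumes \<delta>: "0 < \<delta>" "\<delta> < 1/20" and \<epsilon>: "0 < \<epsilon>"
    and asy: "(\<lambda>N. real (m N)) \<sim>[sequentially] (\<lambda>N. \<epsilon> * (1 + 2*\<delta>) ^ (nat \<lfloor>(1 + \<delta>) * log 2 (real N)\<rfloor>) * real N)"
  shows "(\<lambda>N. measure_pmf.prob (random_formula (nat \<lfloor>(1/2 + \<delta>) * real N\<rfloor>) (nat \<lfloor>(1 + \<delta>) * log 2 (real N)\<rfloor>) (m N))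
                   {Cs. mu_formula (nat \<lfloor>(1/2 + \<delta>) * real N\<rfloor>) (m N) Cs > exp (- (real (nat \<lfloor>(1/2 + \<delta>) * real N\<rfloor>) powr \<delta>))})
              \<in> o[sequentially](\<lambda>N. 2 powr (- real N))"
proof -
  define g where "g = (\<lambda>N::nat. \<epsilon> * (1 + 2*\<delta>) ^ (nat \<lfloor>(1 + \<delta>) * log 2 (real N)\<rfloor>) * real N)"
  define \<rho> where "\<rho> = (1 + \<delta>) * log 2 ((1 + 2*\<delta>) / 2) + 1 - \<delta>"
  have \<rho>0: "\<rho> > 0" unfolding \<rho>_def by (rule rho_pos[OF \<delta>])
  have asy': "(\<lambda>N. real (m N)) \<sim>[sequentially] g" using asy unfolding g_def .
  have gpos: "eventually (\<lambda>N. g N > 0) sequentially"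
    using eventually_ge_at_top[of "1::nat"]
  proof eventually_elim
    case (elim N)
    thus ?case unfolding g_def using \<epsilon> \<delta> by simp
  qed
  have lim: "((\<lambda>N. real (m N) / g N) \<longlongrightarrow> 1) sequentially"
    by (rule asymp_equivD_strong[OF asy']) (use gpos in \<open>auto elim: eventually_mono\<close>)
  have "eventually (\<lambda>N. 1/2 < real (m N) / g N) sequentially"
    by (rule order_tendstoD(1)[OF lim]) simp
  hence EV4: "eventually (\<lambda>N. real (m N) \<ge> g N / 2) sequentially"
    using gpos
  proof eventually_elim
    case (elim N)
    thus ?case by (simp add: field_simps)
  qed
  have "filterlim (\<lambda>N::nat. real N powr \<rho>) at_top sequentially" using \<rho>0 by real_asymp
  hence "eventually (\<lambda>N. real N powr \<rho> \<ge> 8 / \<epsilon>) sequentially"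
    by (simp add: filterlim_at_top)
  hence EV5: "eventually (\<lambda>N. \<epsilon> / 8 * real N powr \<rho> \<ge> 1) sequentially"
  proof eventually_elim
    case (elim N)
    thus ?case using \<epsilon> by (simp add: field_simps)
  qed
  have EV0: "eventually (\<lambda>N::nat. real N \<ge> 4) sequentially" by real_asymp
  have EV1: "eventually (\<lambda>N::nat. 2 * log 2 (real N) \<le> real N / 2 - 1) sequentially" by real_asymp
  have EV2: "eventually (\<lambda>N::nat. (real N / 2 - 1) / (80000 * (2 * log 2 (real N))^2)
      \<ge> real N powr (1/16) + 7 + 2 * log 2 (real N)) sequentially" by real_asymp
  define P where "P = (\<lambda>N. measure_pmf.prob (random_formula (nat \<lfloor>(1/2 + \<delta>) * real N\<rfloor>) (nat \<lfloor>(1 + \<delta>) * log 2 (real N)\<rfloor>) (m N))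
                   {Cs. mu_formula (nat \<lfloor>(1/2 + \<delta>) * real N\<rfloor>) (m N) Cs > exp (- (real (nat \<lfloor>(1/2 + \<delta>) * real N\<rfloor>) powr \<delta>))})"
  have ev: "eventually (\<lambda>N. norm (P N) \<le> 1 * norm (2 powr (- 2 * real N))) sequentially"
    using EV0 EV1 EV2 EV4 EV5
  proof eventually_elim
    case (elim N)
    have M1: "real (m N) \<ge> 4 * 2 ^ (nat \<lfloor>(1 + \<delta>) * log 2 (real N)\<rfloor>) * real N powr \<delta>"
      by (rule M1_point[OF \<delta> \<epsilon> elim(1) refl \<rho>_def elim(5)]) (use elim(4) in \<open>simp add: g_def\<close>)
    have "P N \<le> 2 powr (- 2 * real N)" unfolding P_def
      by (rule pointwise[OF \<delta> refl refl elim(1) elim(2) elim(3) M1])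
    moreover have "P N \<ge> 0" unfolding P_def by simp
    ultimately show ?case by simp
  qed
  have "P \<in> O[sequentially](\<lambda>N. 2 powr (- 2 * real N))"
    by (rule landau_o.bigI[OF _ ev]) simp
  moreover have "(\<lambda>N::nat. 2 powr (- 2 * real N)) \<in> o[sequentially](\<lambda>N. 2 powr (- real N))" by real_asymp
  ultimately have "P \<in> o[sequentially](\<lambda>N. 2 powr (- real N))" by (rule landau_o.big_small_trans)
  thus ?thesis unfolding P_def .
qed

theorem claimA:
  "\<exists>\<delta>0::real. \<delta>0 > 0 \<and>
     (\<forall>\<delta> \<epsilon> :: real. \<forall>m :: nat \<Rightarrow> nat.
        0 < \<delta> \<longrightarrow> \<delta> < \<delta>0 \<longrightarrow> 0 < \<epsilon> \<longrightarrow> \<epsilon> < \<delta>^2 / 9 \<longrightarrow>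
        (let k = (\<lambda>N::nat. nat \<lfloor>(1 + \<delta>) * log 2 (real N)\<rfloor>);
             n = (\<lambda>N::nat. nat \<lfloor>(1/2 + \<delta>) * real N\<rfloor>)
         in ((\<lambda>N. real (m N)) \<sim>[sequentially] (\<lambda>N. \<epsilon> * (1 + 2*\<delta>) ^ k N * real N)) \<longrightarrow>
            (\<lambda>N. measure_pmf.prob (random_formula (n N) (k N) (m N))
                   {Cs. mu_formula (n N) (m N) Cs > exp (- (real (n N) powr \<delta>))})
              \<in> o[sequentially](\<lambda>N. 2 powr (- real N))))"
  apply (rule exI[of _ "1/20"])
  apply (intro conjI allI impI)
   apply simp
  apply (simp only: Let_def)
  apply (intro impI)
  apply (rule main_asym)
     prefer 4 apply assumption
    apply assumption+
  done


end
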